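(* Let $\{m_i\}_{i=1}^{\infty}$ and $\{n_j\}_{j=1}^{\infty}$ be sequences of real numbers with $0<m_1<m_2<\cdots$, $\sum_{i=1}^{\infty}1/m_i=\infty$, and $0<n_1<n_2<\cdots$, $\sum_{j=1}^{\infty}1/n_j=\infty$. Let $X,Y$ be nonnegative random variables with joint distribution function $H$. Then $H$ is uniquely determined by the countably many values $\{\mathcal{L}_H(m_i,n_j): i,j\in\mathbb{N}\}$ of its Laplace–Stieltjes transform; i.e., if $(X_1,Y_1)\sim H_1$ and $(X_2,Y_2)\sim H_2$ are nonnegative random vectors with $\mathcal{L}_{H_1}(m_i,n_j)=\mathcal{L}_{H_2}(m_i,n_j)$ for all $i,j\in\mathbb{N}$, then $H_1=H_2$.
   Context: For a random vector $(X,Y)$ in $[0,\infty)^2$ with joint distribution function $H(x,y)={\bf P}(X\le x,Y\le y)$, the bivariate Laplace–Stieltjes transform is $\mathcal{L}_H(s,t)={\bf E}[\exp(-sX-tY)]$, $s,t>0$. *)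

theory Defs
  imports "HOL-Probability.Probability"
begin

definition joint_cdf :: "'a measure \<Rightarrow> ('a \<Rightarrow> real) \<Rightarrow> ('a \<Rightarrow> real) \<Rightarrow> real \<Rightarrow> real \<Rightarrow> real" where
  "joint_cdf M X Y x y = measure M {\<omega> \<in> space M. X \<omega> \<le> x \<and> Y \<omega> \<le> y}"

definition bivariate_LST :: "'a measure \<Rightarrow> ('a \<Rightarrow> real) \<Rightarrow> ('a \<Rightarrow> real) \<Rightarrow> real \<Rightarrow> real \<Rightarrow> real" where
  "bivariate_LST M X Y s t = (\<integral>\<omega>. exp (- s * X \<omega> - t * Y \<omega>) \<partial>M)"

end

theory Submission
  imports Defs "HOL-Complex_Analysis.Complex_Analysis"
begin
lemma norm_exp_sub_le:
  fixes u :: complex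
  shows "norm (exp u - 1 - u) \<le> norm u ^ 2 * exp (norm u)"
proof -
  have sums: "(\<lambda>k. u ^ (k + 2) /\<^sub>R fact (k + 2)) sums (exp u - (\<Sum>k<2. u ^ k /\<^sub>R fact k))"
    by (intro sums_split_initial_segment exp_converges)
  have s2: "summable (\<lambda>k. norm (u ^ (k + 2) /\<^sub>R fact (k + 2)))"
    using summable_norm_exp[of u]
    by (intro summable_ignore_initial_segment) (auto simp: norm_power norm_divide divide_simps)
  have "exp u - 1 - u = (\<Sum>k. u ^ (k + 2) /\<^sub>R fact (k + 2))"
    using sums by (simp add: sums_iff eval_nat_numeral)
  also have "norm \<dots> \<le> (\<Sum>k. norm (u ^ (k + 2) /\<^sub>R fact (k + 2)))"
    using s2 by (rule summable_norm)
  also have "\<dots> \<le> (\<Sum>k. norm u ^ 2 * (norm u ^ k / fact k))"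
  proof (rule suminf_le)
    fix k
    have "norm (u ^ (k + 2) /\<^sub>R fact (k + 2)) = norm u ^ 2 * norm u ^ k / fact (k+2)"
      by (simp add: norm_mult norm_power power_add power2_eq_square field_simps del: of_nat_add)
    also have "\<dots> \<le> norm u ^ 2 * norm u ^ k / fact k"
      by (intro divide_left_mono fact_mono) auto
    finally show "norm (u ^ (k + 2) /\<^sub>R fact (k + 2)) \<le> norm u ^ 2 * (norm u ^ k / fact k)"
      by simp
  next
    show "summable (\<lambda>k. norm (u ^ (k + 2) /\<^sub>R fact (k + 2)))" by (rule s2)
    have "summable (\<lambda>k. norm u ^ k /\<^sub>R fact k)" by (rule exp_converges[THEN sums_summable])
    then show "summable (\<lambda>k. norm u ^ 2 * (norm u ^ k / fact k))"
      by (intro summable_mult) (simp add: divide_inverse mult.commute)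
  qed
  also have "\<dots> = norm u ^ 2 * exp (norm u)"
  proof -
    have "(\<lambda>k. norm u ^ k / fact k) sums exp (norm u)"
      using exp_converges[of "norm u"] by (simp add: divide_inverse mult.commute)
    then have "(\<lambda>k. norm u ^ 2 * (norm u ^ k / fact k)) sums (norm u ^ 2 * exp (norm u))"
      by (rule sums_mult)
    then show ?thesis by (rule sums_unique[symmetric])
  qed
  finally show ?thesis .
qed

lemma deriv_by_bound:
  fixes f :: "complex \<Rightarrow> complex"
  assumes "\<delta> > 0" "\<And>h. norm h < \<delta> \<Longrightarrow> norm (f (z+h) - f z - h*D) \<le> C * norm h ^ 2"
  shows "(f has_field_derivative D) (at z)"
proof -
  have "((\<lambda>y. (f y - f z) / (y - z) - D) \<longlongrightarrow> 0) (at z)"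
  proof (rule Lim_null_comparison)
    show "\<forall>\<^sub>F y in at z. norm ((f y - f z) / (y - z) - D) \<le> C * norm (y - z)"
      unfolding eventually_at
    proof (intro exI[of _ \<delta>] conjI ballI impI)
      fix y assume y: "y \<in> UNIV" "y \<noteq> z \<and> dist y z < \<delta>"
      have ne: "y - z \<noteq> 0" using y by auto
      have "(f y - f z) / (y - z) - D = (f (z + (y - z)) - f z - (y - z) * D) / (y - z)"
        using ne by (simp add: field_simps)
      also have "norm \<dots> \<le> C * norm (y - z) ^ 2 / norm (y - z)"
        unfolding norm_divide
        by (rule divide_right_mono[OF assms(2)]) (use y in \<open>auto simp: dist_norm\<close>)
      also have "\<dots> = C * norm (y - z)" using ne by (simp add: power2_eq_square)
      finally show "norm ((f y - f z) / (y - z) - D) \<le> C * norm (y - z)" .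
    qed (use assms(1) in auto)
    show "((\<lambda>y. C * norm (y - z)) \<longlongrightarrow> 0) (at z)"
      by (rule tendsto_eq_intros refl | simp)+ 
  qed
  then show ?thesis
    unfolding has_field_derivative_iff by (simp add: LIM_zero_iff)
qed

lemma exp_ge_sq4: "(t::real) \<ge> 0 \<Longrightarrow> t^2/4 \<le> exp t"
proof -
  assume t: "t \<ge> 0"
  have "(t/2)^2 \<le> (1 + t/2)^2" using t by (intro power_mono) auto
  also have "\<dots> \<le> exp (t/2) ^ 2" using t by (intro power_mono exp_ge_add_one_self) auto
  also have "\<dots> = exp t" by (simp add: exp_double[symmetric] power2_eq_square exp_add[symmetric])
  finally show ?thesis by (simp add: power_divide)
qed

lemma laplace_holo:
  fixes M :: "'a measure" and X w :: "'a \<Rightarrow> real"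
  assumes P: "prob_space M" and Xm[measurable]: "X \<in> borel_measurable M" and wm[measurable]: "w \<in> borel_measurable M"
   and Xnn: "\<forall>\<omega>\<in>space M. X \<omega> \<ge> 0" and wb: "\<forall>\<omega>\<in>space M. \<bar>w \<omega>\<bar> \<le> 1"
  shows "(\<lambda>z. \<integral>\<omega>. complex_of_real (w \<omega>) * exp (- z * complex_of_real (X \<omega>)) \<partial>M) holomorphic_on {z. 0 < Re z}"
proof -
  interpret prob_space M by (rule P)
  define G where "G = (\<lambda>z. \<integral>\<omega>. complex_of_real (w \<omega>) * exp (- z * complex_of_real (X \<omega>)) \<partial>M)"
  have nE: "norm (exp (- z * complex_of_real (X \<omega>))) = exp (- Re z * X \<omega>)" for z \<omega>
    by (simp add: norm_exp_eq_Re)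
  have intG: "integrable M (\<lambda>\<omega>. complex_of_real (w \<omega>) * exp (- z * complex_of_real (X \<omega>)))"
    if "Re z \<ge> 0" for z
  proof (rule integrable_const_bound[where B=1])
    show "AE \<omega> in M. norm (complex_of_real (w \<omega>) * exp (- z * complex_of_real (X \<omega>))) \<le> 1"
    proof (rule AE_I2)
      fix \<omega> assume "\<omega> \<in> space M"
      then have "\<bar>w \<omega>\<bar> \<le> 1" "exp (- Re z * X \<omega>) \<le> 1" using wb Xnn that
        by (auto simp: mult_nonneg_nonneg)
      then show "norm (complex_of_real (w \<omega>) * exp (- z * complex_of_real (X \<omega>))) \<le> 1"
        unfolding norm_mult nE by (simp add: mult_le_one)
    qed
  qed measurable
  have intD: "integrable M (\<lambda>\<omega>. complex_of_real (w \<omega>) * (- complex_of_real (X \<omega>)) * exp (- z * complex_of_real (X \<omega>)))"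
    if "Re z > 0" for z
  proof (rule integrable_const_bound[where B="1 / Re z"])
    show "AE \<omega> in M. norm (complex_of_real (w \<omega>) * (- complex_of_real (X \<omega>)) * exp (- z * complex_of_real (X \<omega>))) \<le> 1 / Re z"
    proof (rule AE_I2)
      fix \<omega> assume om: "\<omega> \<in> space M"
      have x: "X \<omega> \<ge> 0" using Xnn om by auto
      have "Re z * X \<omega> \<le> exp (Re z * X \<omega>)"
        using exp_ge_add_one_self[of "Re z * X \<omega>"] by linarith
      then have "X \<omega> * exp (- Re z * X \<omega>) \<le> 1 / Re z"
        using that by (simp add: exp_minus field_simps)
      moreover have "\<bar>w \<omega>\<bar> \<le> 1" using wb om by auto
      ultimately have "\<bar>w \<omega>\<bar> * (X \<omega> * exp (- Re z * X \<omega>)) \<le> 1 * (1 / Re z)"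
        using x that by (intro mult_mono) auto
      then show "norm (complex_of_real (w \<omega>) * (- complex_of_real (X \<omega>)) * exp (- z * complex_of_real (X \<omega>))) \<le> 1 / Re z"
        unfolding norm_mult nE using x by (simp add: mult.assoc)
    qed
  qed measurable
  have "\<exists>f'. (G has_field_derivative f') (at z)" if z: "0 < Re z" for z
  proof -
    define r where "r = Re z"
    have r: "r > 0" using z r_def by auto
    define D where "D = (\<integral>\<omega>. complex_of_real (w \<omega>) * (- complex_of_real (X \<omega>)) * exp (- z * complex_of_real (X \<omega>)) \<partial>M)"
    have "(G has_field_derivative D) (at z)"
    proof (rule deriv_by_bound[where \<delta>="r/2" and C="16 / r^2"])
      show "r/2 > 0" using r by auto
      fix h :: complex assume h: "norm h < r/2"
      have Rzh: "Re (z + h) > 0"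
        using h abs_Re_le_cmod[of h] r_def by auto
      have "G (z+h) - G z - h * D =
         (\<integral>\<omega>. complex_of_real (w \<omega>) * exp (- (z+h) * complex_of_real (X \<omega>))
              - complex_of_real (w \<omega>) * exp (- z * complex_of_real (X \<omega>))
              - h * (complex_of_real (w \<omega>) * (- complex_of_real (X \<omega>)) * exp (- z * complex_of_real (X \<omega>))) \<partial>M)"
      proof -
        have i1: "integrable M (\<lambda>\<omega>. complex_of_real (w \<omega>) * exp (- (z+h) * complex_of_real (X \<omega>)))"
          using intG[of "z+h"] Rzh by auto
        have i2: "integrable M (\<lambda>\<omega>. complex_of_real (w \<omega>) * exp (- z * complex_of_real (X \<omega>)))"
          using intG[of z] z by auto
        have i3: "integrable M (\<lambda>\<omega>. h * (complex_of_real (w \<omega>) * (- complex_of_real (X \<omega>)) * exp (- z * complex_of_real (X \<omega>))))"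
          using intD[OF z] by (rule integrable_mult_right)
        have i12: "integrable M (\<lambda>\<omega>. complex_of_real (w \<omega>) * exp (- (z+h) * complex_of_real (X \<omega>))
              - complex_of_real (w \<omega>) * exp (- z * complex_of_real (X \<omega>)))"
          using i1 i2 by (rule Bochner_Integration.integrable_diff)
        show ?thesis
          unfolding G_def D_def
          using Bochner_Integration.integral_diff[OF i12 i3] Bochner_Integration.integral_diff[OF i1 i2] Bochner_Integration.integral_mult_right[OF intD[OF z], of h]
          by simp
      qed
      also have "\<dots> = (\<integral>\<omega>. complex_of_real (w \<omega>) * exp (- z * complex_of_real (X \<omega>)) *
              (exp (- h * complex_of_real (X \<omega>)) - 1 - (- h * complex_of_real (X \<omega>))) \<partial>M)"
        by (intro Bochner_Integration.integral_cong refl)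
           (simp add: algebra_simps exp_add[symmetric])
      finally have eq: "G (z+h) - G z - h * D = \<dots>" .
      have bd: "norm (complex_of_real (w \<omega>) * exp (- z * complex_of_real (X \<omega>)) *
              (exp (- h * complex_of_real (X \<omega>)) - 1 - (- h * complex_of_real (X \<omega>)))) \<le> 16 / r^2 * norm h ^ 2"
        if om: "\<omega> \<in> space M" for \<omega>
      proof -
        have x: "X \<omega> \<ge> 0" using Xnn om by auto
        have w1: "\<bar>w \<omega>\<bar> \<le> 1" using wb om by auto
        have n1: "norm (- h * complex_of_real (X \<omega>)) = norm h * X \<omega>"
          using x by (simp add: norm_mult)
        have "norm (exp (- h * complex_of_real (X \<omega>)) - 1 - (- h * complex_of_real (X \<omega>)))
              \<le> (norm h * X \<omega>)^2 * exp (norm h * X \<omega>)"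
          using norm_exp_sub_le[of "- h * complex_of_real (X \<omega>)"] n1 by simp
        also have "\<dots> \<le> (norm h * X \<omega>)^2 * exp (r/2 * X \<omega>)"
        proof (intro mult_left_mono)
          have "norm h * X \<omega> \<le> r/2 * X \<omega>" using h x by (intro mult_right_mono) auto
          then show "exp (norm h * X \<omega>) \<le> exp (r/2 * X \<omega>)" by simp
        qed auto
        finally have A: "norm (exp (- h * complex_of_real (X \<omega>)) - 1 - (- h * complex_of_real (X \<omega>)))
              \<le> (norm h * X \<omega>)^2 * exp (r/2 * X \<omega>)" .
        have B: "(r/2 * X \<omega>)^2/4 \<le> exp (r/2 * X \<omega>)"
          using x r by (intro exp_ge_sq4) auto
        have "norm (complex_of_real (w \<omega>) * exp (- z * complex_of_real (X \<omega>)) *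
              (exp (- h * complex_of_real (X \<omega>)) - 1 - (- h * complex_of_real (X \<omega>))))
           \<le> 1 * exp (- r * X \<omega>) * ((norm h * X \<omega>)^2 * exp (r/2 * X \<omega>))"
          unfolding norm_mult nE r_def[symmetric] using w1 A
          by (intro mult_mono) auto
        also have "\<dots> = norm h ^ 2 * (X \<omega>^2 / exp (r/2 * X \<omega>))"
          by (simp add: exp_minus field_simps power2_eq_square exp_add[symmetric])
        also have "\<dots> \<le> norm h ^ 2 * (16 / r^2)"
        proof (intro mult_left_mono)
          show "X \<omega>^2 / exp (r/2 * X \<omega>) \<le> 16 / r^2"
            using B r by (simp add: field_simps power2_eq_square)
        qed auto
        finally show ?thesis by (simp add: mult.commute)
      qed
      show "norm (G (z+h) - G z - h * D) \<le> 16 / r^2 * norm h ^ 2"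
        unfolding eq
      proof (rule order_trans[OF integral_norm_bound], rule integral_le_const)
        show "AE x in M. norm (complex_of_real (w x) * exp (- z * complex_of_real (X x)) *
              (exp (- h * complex_of_real (X x)) - 1 - (- h * complex_of_real (X x)))) \<le> 16 / r^2 * norm h ^ 2"
          by (rule AE_I2[OF bd])
        then show "integrable M (\<lambda>x. norm (complex_of_real (w x) * exp (- z * complex_of_real (X x)) *
              (exp (- h * complex_of_real (X x)) - 1 - (- h * complex_of_real (X x)))))"
          by (intro integrable_norm integrable_const_bound[where B="16 / r^2 * norm h ^ 2"]) measurable
      qed
    qed
    then show ?thesis by blast
  qed
  then show ?thesis
    unfolding G_def[symmetric]
    by (subst holomorphic_on_open) (auto simp: open_halfspace_Re_gt)
qed

lemma ident: "norm (1 - cnj a * w)^2 = norm (w - a)^2 + (1 - norm a^2) * (1 - norm w^2)"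
  by (simp only: cmod_power2) (simp add: algebra_simps power2_eq_square)

lemma disk_step:
  fixes g :: "complex \<Rightarrow> complex"
  assumes holo: "g holomorphic_on ball 0 1" and bd: "\<forall>w\<in>ball 0 1. norm (g w) \<le> C"
    and a: "a \<in> ball 0 1" and ga: "g a = 0"
  shows "\<exists>g1. g1 holomorphic_on ball 0 1 \<and> (\<forall>w\<in>ball 0 1. norm (g1 w) \<le> C) \<and>
           (\<forall>w\<in>ball 0 1. w \<noteq> a \<longrightarrow> g1 w = g w * (1 - cnj a * w) / (w - a))"
proof -
  define q where "q = (\<lambda>z. if z = a then deriv g a else (g z - g a) / (z - a))"
  have qh: "q holomorphic_on ball 0 1" unfolding q_def
    by (rule pole_lemma_open[OF holo]) auto
  define g1 where "g1 = (\<lambda>z. q z * (1 - cnj a * z))"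
  have g1h: "g1 holomorphic_on ball 0 1" unfolding g1_def
    by (intro holomorphic_intros qh)
  have g1eq: "g1 w = g w * (1 - cnj a * w) / (w - a)" if "w \<noteq> a" for w
    using that ga by (simp add: g1_def q_def)
  have na: "norm a < 1" using a by auto
  have C0: "0 \<le> C"
  proof -
    have "norm (g 0) \<le> C" using bd by auto
    then show ?thesis using norm_ge_zero[of "g 0"] by linarith
  qed
  have "norm (g1 w0) \<le> C" if w0: "w0 \<in> ball 0 1" for w0
  proof -
    have nw0: "norm w0 < 1" using w0 by auto
    define \<rho> where "\<rho> = (\<lambda>r::real. C * sqrt (1 + (1 - norm a ^ 2) * (1 - r ^ 2) / (r - norm a) ^ 2))"
    have le: "norm (g1 w0) \<le> \<rho> r" if r: "max (norm w0) (norm a) < r" "r < 1" for r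
    proof (rule maximum_modulus_frontier[of g1 "ball 0 r"])
      have r0: "r > 0" using r norm_ge_zero[of a] by linarith
      have sub: "cball 0 r \<subseteq> ball 0 1" using r by auto
      show "g1 holomorphic_on interior (ball 0 r)"
        using g1h by (rule holomorphic_on_subset) (use sub in auto)
      show "continuous_on (closure (ball 0 r)) g1"
        using r0 holomorphic_on_imp_continuous_on[OF holomorphic_on_subset[OF g1h sub]] by simp
      show "bounded (ball (0::complex) r)" by simp
      show "w0 \<in> ball 0 r" using r by auto
      fix w :: complex assume "w \<in> frontier (ball 0 r)"
      then have nw: "norm w = r" using r0 by (simp add: frontier_ball)
      have ar: "norm a < r" using r by auto
      have dpos: "r - norm a \<le> norm (w - a)" using nw norm_triangle_ineq2[of w a] by simp
      have wa: "w \<noteq> a" using nw ar by auto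
      have wb: "w \<in> ball 0 1" using nw r by auto
      define K where "K = (1 - norm a ^ 2) * (1 - r ^ 2)"
      have K0: "K \<ge> 0"
      proof -
        have "norm a ^ 2 \<le> 1" using na norm_ge_zero[of a] by (intro power_le_one) auto
        moreover have "r ^ 2 \<le> 1" using r r0 by (intro power_le_one) auto
        ultimately show ?thesis unfolding K_def by (intro mult_nonneg_nonneg) auto
      qed
      have ratio: "norm (1 - cnj a * w) / norm (w - a) \<le> sqrt (1 + K / (r - norm a) ^ 2)"
      proof (rule real_le_rsqrt)
        have pos: "norm (w - a) > 0" using wa by auto
        have "(norm (1 - cnj a * w) / norm (w - a))^2 = (norm (w - a)^2 + K) / norm (w - a)^2"
          unfolding power_divide ident K_def nw by simp
        also have "\<dots> = 1 + K / norm (w - a)^2" using pos by (simp add: field_simps)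
        also have "\<dots> \<le> 1 + K / (r - norm a)^2"
          using K0 dpos ar by (intro add_left_mono divide_left_mono power_mono mult_pos_pos) auto
        finally show "(norm (1 - cnj a * w) / norm (w - a))^2 \<le> 1 + K / (r - norm a) ^ 2" .
      qed
      have "norm (g1 w) = norm (g w) * (norm (1 - cnj a * w) / norm (w - a))"
        using g1eq[OF wa] by (simp add: norm_mult norm_divide)
      also have "\<dots> \<le> C * sqrt (1 + K / (r - norm a) ^ 2)"
        using bd wb ratio C0 by (intro mult_mono) auto
      finally show "norm (g1 w) \<le> \<rho> r" unfolding \<rho>_def K_def .
    qed
    have lim: "(\<rho> \<longlongrightarrow> \<rho> 1) (at_left 1)"
    proof -
      have "continuous (at 1) \<rho>" unfolding \<rho>_def using na
        by (intro continuous_intros) auto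
      then have "(\<rho> \<longlongrightarrow> \<rho> 1) (at 1)" by (simp add: isCont_def)
      then show ?thesis by (rule filterlim_mono) (auto simp: at_le)
    qed
    have "norm (g1 w0) \<le> \<rho> 1"
    proof (rule tendsto_le[OF _ lim tendsto_const])
      show "\<not> trivial_limit (at_left (1::real))" by simp
      show "\<forall>\<^sub>F r in at_left 1. norm (g1 w0) \<le> \<rho> r"
        apply (subst eventually_at_left[of "0::real"], simp)
        using nw0 na by (intro exI[of _ "max (norm w0) (norm a)"]) (auto intro!: le)
    qed
    then show ?thesis by (simp add: \<rho>_def)
  qed
  then show ?thesis using g1h g1eq by blast
qed


lemma disk_prod:
  fixes a :: "nat \<Rightarrow> complex"
  assumes inj: "inj a" and aD: "\<forall>k. a k \<in> ball 0 1" and a0: "\<forall>k. a k \<noteq> 0"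
  shows "g holomorphic_on ball 0 1 \<Longrightarrow> \<forall>w\<in>ball 0 1. norm (g w) \<le> C \<Longrightarrow> \<forall>k<N. g (a k) = 0
         \<Longrightarrow> norm (g 0) \<le> C * (\<Prod>k<N. norm (a k))"
proof (induction N arbitrary: g)
  case 0
  then show ?case by auto
next
  case (Suc N)
  have gaN: "g (a N) = 0" using Suc.prems(3) by auto
  obtain g1 where g1h: "g1 holomorphic_on ball 0 1" and g1b: "\<forall>w\<in>ball 0 1. norm (g1 w) \<le> C"
     and g1e: "\<forall>w\<in>ball 0 1. w \<noteq> a N \<longrightarrow> g1 w = g w * (1 - cnj (a N) * w) / (w - a N)"
    using disk_step[OF Suc.prems(1) Suc.prems(2) aD[rule_format, of N] gaN] by blast
  have z: "\<forall>k<N. g1 (a k) = 0"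
  proof (intro allI impI)
    fix k assume k: "k < N"
    have "a k \<noteq> a N" using inj k by (auto dest: injD)
    then show "g1 (a k) = 0" using g1e aD Suc.prems(3) k by auto
  qed
  have IH: "norm (g1 0) \<le> C * (\<Prod>k<N. norm (a k))"
    using Suc.IH[OF g1h g1b z] .
  have "g1 0 = g 0 * (1 - cnj (a N) * 0) / (0 - a N)"
    using g1e a0 by auto
  then have "norm (g 0) = norm (g1 0) * norm (a N)"
    using a0 by (simp add: norm_divide norm_minus_cancel)
  also have "\<dots> \<le> C * (\<Prod>k<N. norm (a k)) * norm (a N)"
    by (rule mult_right_mono[OF IH]) simp
  also have "\<dots> = C * (\<Prod>k<Suc N. norm (a k))" by (simp add: mult.assoc)
  finally show ?case .
qed

lemma halfplane_zero:
  fixes F :: "complex \<Rightarrow> complex" and m :: "nat \<Rightarrow> real"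
  assumes holo: "F holomorphic_on {z. 0 < Re z}" and bd: "\<forall>z. 0 < Re z \<longrightarrow> norm (F z) \<le> C"
    and m_pos: "m 0 > 0" and m_mono: "strict_mono m" and m_div: "\<not> summable (\<lambda>i. 1 / m i)"
    and zeros: "\<forall>i. F (complex_of_real (m i)) = 0"
    and z0: "0 < Re z0"
  shows "F z0 = 0"
proof (cases "\<exists>i. z0 = complex_of_real (m i)")
  case True
  then show ?thesis using zeros by auto
next
  case False
  define x0 where "x0 = Re z0"
  define y0 where "y0 = Im z0"
  have x0: "x0 > 0" using z0 x0_def by simp
  define \<phi> where "\<phi> = (\<lambda>w. (z0 + cnj z0 * w) / (1 - w))"
  define \<psi> where "\<psi> = (\<lambda>z. (z - z0) / (z + cnj z0))"
  define a where "a = (\<lambda>k. \<psi> (complex_of_real (m k)))"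
  have mge: "m k \<ge> m 0" for k using strict_mono_less_eq[OF m_mono, of 0 k] by simp
  have mpos: "m k > 0" for k using mge[of k] m_pos by linarith
  have phipsi: "\<phi> (\<psi> z) = z" if "Re z > 0" for z
  proof -
    have n1: "z + cnj z0 \<noteq> 0" using that z0 by (auto simp: complex_eq_iff)
    have n2: "z0 + cnj z0 \<noteq> 0" using z0 by (auto simp: complex_eq_iff)
    have "1 - (z - z0)/(z + cnj z0) = (z0 + cnj z0) / (z + cnj z0)" using n1 by (simp add: field_simps)
    moreover have "z0 + cnj z0 * ((z - z0)/(z + cnj z0)) = z * (z0 + cnj z0) / (z + cnj z0)"
      using n1 by (simp add: field_simps)
    ultimately show ?thesis using n1 n2 by (simp add: \<phi>_def \<psi>_def)
  qed
  have rephi: "Re (\<phi> w) = x0 * (1 - norm w ^ 2) / norm (1 - w) ^ 2" for w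
    unfolding \<phi>_def x0_def by (simp only: Re_divide cmod_power2) (simp add: algebra_simps power2_eq_square)
  have phiH: "0 < Re (\<phi> w)" if "w \<in> ball 0 1" for w
  proof -
    have nw: "norm w < 1" using that by auto
    then have "w \<noteq> 1" by auto
    then have "norm (1 - w) ^ 2 > 0" by auto
    moreover have "1 - norm w ^ 2 > 0" using nw norm_ge_zero[of w]
      by (simp add: power_less_one_iff abs_square_less_1)
    ultimately show ?thesis unfolding rephi using x0 by simp
  qed
  have phih: "\<phi> holomorphic_on ball 0 1"
    unfolding \<phi>_def by (intro holomorphic_intros) auto
  define g where "g = F \<circ> \<phi>"
  have gh: "g holomorphic_on ball 0 1"
    unfolding g_def by (rule holomorphic_on_compose_gen[OF phih holo]) (auto intro: phiH)
  have gb: "\<forall>w\<in>ball 0 1. norm (g w) \<le> C"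
    using bd phiH by (auto simp: g_def)
  define q where "q = (\<lambda>k. 4 * m k * x0 / ((m k + x0)^2 + y0^2))"
  have qnn: "q k \<ge> 0" for k unfolding q_def using mpos[of k] x0 by auto
  have qpos: "q k > 0" for k unfolding q_def using mpos[of k] x0
    by (intro divide_pos_pos) (auto intro: add_pos_nonneg)
  have na2: "norm (a k) ^ 2 = 1 - q k" for k
  proof -
    have e1: "norm (complex_of_real (m k) - z0) ^ 2 = (m k - x0)^2 + y0^2"
      by (simp only: cmod_power2) (simp add: x0_def y0_def)
    have e2: "norm (complex_of_real (m k) + cnj z0) ^ 2 = (m k + x0)^2 + y0^2"
      by (simp only: cmod_power2) (simp add: x0_def y0_def)
    have pos: "(m k + x0)^2 + y0^2 > 0" using mpos[of k] x0 by (intro add_pos_nonneg) auto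
    have "norm (a k) ^ 2 = ((m k - x0)^2 + y0^2) / ((m k + x0)^2 + y0^2)"
      unfolding a_def \<psi>_def norm_divide power_divide e1 e2 ..
    also have "\<dots> = 1 - q k" unfolding q_def using pos by (simp add: field_simps power2_eq_square)
    finally show ?thesis .
  qed
  have aD: "\<forall>k. a k \<in> ball 0 1"
  proof
    fix k
    have "norm (a k) ^ 2 < 1 ^ 2" using na2[of k] qpos[of k] by simp
    then have "norm (a k) < 1" by (rule power_less_imp_less_base) simp
    then show "a k \<in> ball 0 1" by simp
  qed
  have phia: "\<phi> (a k) = complex_of_real (m k)" for k
    unfolding a_def by (rule phipsi) (use mpos in simp)
  have phi0: "\<phi> 0 = z0" by (simp add: \<phi>_def)
  have a0: "\<forall>k. a k \<noteq> 0"
  proof (intro allI notI)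
    fix k assume "a k = 0"
    then have "z0 = complex_of_real (m k)" using phia[of k] phi0 by simp
    then show False using False by blast
  qed
  have inj: "inj a"
  proof (rule injI)
    fix i j assume "a i = a j"
    then have "m i = m j" using phia[of i] phia[of j] by simp
    then show "i = j" using strict_mono_eq[OF m_mono] by blast
  qed
  have ga: "g (a k) = 0" for k using zeros phia by (simp add: g_def)
  have bound: "norm (F z0) \<le> C * (\<Prod>k<N. norm (a k))" for N
    using disk_prod[OF inj aD a0 gh gb] ga phi0 by (simp add: g_def)
  have na_le: "norm (a k) \<le> exp (- q k / 2)" for k
  proof (rule power2_le_imp_le)
    have "1 - q k \<le> exp (- q k)" using exp_ge_add_one_self[of "- q k"] by simp
    also have "\<dots> = exp (- q k / 2) ^ 2" by (simp add: power2_eq_square exp_add[symmetric])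
    finally show "norm (a k) ^ 2 \<le> exp (- q k / 2) ^ 2" using na2 by simp
  qed simp
  have prod_le: "(\<Prod>k<N. norm (a k)) \<le> exp (- (\<Sum>k<N. q k) / 2)" for N
  proof -
    have "(\<Prod>k<N. norm (a k)) \<le> (\<Prod>k<N. exp (- q k / 2))"
      by (intro prod_mono conjI norm_ge_zero na_le)
    also have "\<dots> = exp (\<Sum>k<N. - q k / 2)" by (simp add: exp_sum)
    also have "(\<Sum>k<N. - q k / 2) = - (\<Sum>k<N. q k) / 2"
      by (simp add: sum_negf sum_divide_distrib)
    finally show ?thesis .
  qed
  define K where "K = (1 + x0 / m 0)^2 + (y0 / m 0)^2"
  have Kpos: "K > 0"
  proof -
    have "1 + x0 / m 0 > 0" using x0 m_pos by (simp add: add_pos_pos)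
    then show ?thesis unfolding K_def by (intro add_pos_nonneg) auto
  qed
  have qlow: "q k \<ge> (4 * x0 / K) * (1 / m k)" for k
  proof -
    have mk: "m k > 0" "m k \<ge> m 0" using mpos mge by auto
    have "m k + x0 \<le> m k * (1 + x0 / m 0)"
    proof -
      have "x0 \<le> m k * (x0 / m 0)" using mk m_pos x0 by (simp add: field_simps mult_right_mono)
      then show ?thesis by (simp add: algebra_simps)
    qed
    then have A: "(m k + x0)^2 \<le> m k ^ 2 * (1 + x0 / m 0)^2"
      using mk x0 by (simp add: power_mult_distrib[symmetric] power_mono)
    have "y0^2 \<le> m k ^ 2 * (y0 / m 0)^2"
    proof -
      have "m 0 ^ 2 \<le> m k ^ 2" using mk m_pos by (intro power_mono) auto
      then have "y0^2 * m 0 ^ 2 \<le> y0^2 * m k ^ 2" by (intro mult_left_mono) auto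
      then show ?thesis using m_pos by (simp add: field_simps power_divide)
    qed
    with A have D: "(m k + x0)^2 + y0^2 \<le> m k ^ 2 * K" unfolding K_def by (simp add: algebra_simps)
    have Dpos: "(m k + x0)^2 + y0^2 > 0" using mk x0 by (intro add_pos_nonneg) auto
    have "(4 * x0 / K) * (1 / m k) = 4 * m k * x0 / (m k ^ 2 * K)"
      using mk Kpos by (simp add: field_simps power2_eq_square)
    also have "\<dots> \<le> 4 * m k * x0 / ((m k + x0)^2 + y0^2)"
      using D Dpos mk x0 by (intro divide_left_mono) auto
    finally show ?thesis unfolding q_def .
  qed
  have qns: "\<not> summable q"
  proof
    assume "summable q"
    then have "summable (\<lambda>k. (K / (4 * x0)) * q k)" by (rule summable_mult)
    moreover have "norm (1 / m k) \<le> (K / (4 * x0)) * q k" for k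
    proof -
      have "(K / (4 * x0)) * ((4 * x0 / K) * (1 / m k)) \<le> (K / (4 * x0)) * q k"
        using qlow[of k] Kpos x0 by (intro mult_left_mono) auto
      then show ?thesis using Kpos x0 mpos[of k] by simp
    qed
    ultimately have "summable (\<lambda>k. 1 / m k)"
      by (metis summable_comparison_test')
    then show False using m_div by simp
  qed
  have unb: "\<exists>n. (\<Sum>i<n. q i) > B" for B
  proof (rule ccontr)
    assume "\<not> ?thesis"
    then have "\<And>n. (\<Sum>i<n. q i) \<le> B" by (simp add: not_less)
    then have "summable q" by (intro summableI_nonneg_bounded[where x=B] qnn)
    then show False using qns by simp
  qed
  have small: "\<exists>N. (\<Prod>k<N. norm (a k)) < \<epsilon>" if e: "\<epsilon> > 0" for \<epsilon>
  proof -
    obtain n where n: "(\<Sum>i<n. q i) > - 2 * ln \<epsilon>" using unb by blast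
    have "exp (- (\<Sum>k<n. q k) / 2) < exp (ln \<epsilon>)" using n by simp
    then have "exp (- (\<Sum>k<n. q k) / 2) < \<epsilon>" using e by simp
    then show ?thesis using prod_le[of n] by (intro exI[of _ n]) linarith
  qed
  have C0: "C \<ge> 0"
  proof -
    have "norm (F z0) \<le> C" using bd z0 by auto
    then show ?thesis using norm_ge_zero[of "F z0"] by linarith
  qed
  show ?thesis
  proof (rule ccontr)
    assume nz: "F z0 \<noteq> 0"
    define \<epsilon> where "\<epsilon> = norm (F z0) / (C + 1)"
    have e: "\<epsilon> > 0" using nz C0 by (simp add: \<epsilon>_def)
    obtain N where N: "(\<Prod>k<N. norm (a k)) < \<epsilon>" using small[OF e] by blast
    have "norm (F z0) \<le> C * \<epsilon>"
      using bound[of N] N C0 by (meson less_imp_le mult_left_mono order_trans)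
    also have "\<dots> < norm (F z0)" using nz C0 by (simp add: \<epsilon>_def field_simps)
    finally show False by simp
  qed
qed


lemma laplace_int_bound:
  fixes M :: "'a measure" and X w :: "'a \<Rightarrow> real"
  assumes P: "prob_space M" and Xm[measurable]: "X \<in> borel_measurable M" and wm[measurable]: "w \<in> borel_measurable M"
   and Xnn: "\<forall>\<omega>\<in>space M. X \<omega> \<ge> 0" and wb: "\<forall>\<omega>\<in>space M. \<bar>w \<omega>\<bar> \<le> 1" and z: "Re z \<ge> 0"
  shows "norm (\<integral>\<omega>. complex_of_real (w \<omega>) * exp (- z * complex_of_real (X \<omega>)) \<partial>M) \<le> 1"
proof -
  interpret prob_space M by (rule P)
  have nE: "norm (exp (- z * complex_of_real (X \<omega>))) = exp (- Re z * X \<omega>)" for \<omega>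
    by (simp add: norm_exp_eq_Re)
  have b: "AE \<omega> in M. norm (complex_of_real (w \<omega>) * exp (- z * complex_of_real (X \<omega>))) \<le> 1"
  proof (rule AE_I2)
    fix \<omega> assume "\<omega> \<in> space M"
    then have "\<bar>w \<omega>\<bar> \<le> 1" "exp (- Re z * X \<omega>) \<le> 1" using wb Xnn z
      by (auto simp: mult_nonneg_nonneg)
    then show "norm (complex_of_real (w \<omega>) * exp (- z * complex_of_real (X \<omega>))) \<le> 1"
      unfolding norm_mult nE by (simp add: mult_le_one)
  qed
  show ?thesis
  proof (rule order_trans[OF integral_norm_bound], rule integral_le_const)
    show "AE \<omega> in M. norm (complex_of_real (w \<omega>) * exp (- z * complex_of_real (X \<omega>))) \<le> 1" by (rule b)
    then show "integrable M (\<lambda>\<omega>. norm (complex_of_real (w \<omega>) * exp (- z * complex_of_real (X \<omega>))))"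
      by (intro integrable_norm integrable_const_bound[where B=1]) measurable
  qed
qed

lemma laplace_real:
  fixes M :: "'a measure" and X w :: "'a \<Rightarrow> real"
  shows "(\<integral>\<omega>. complex_of_real (w \<omega>) * exp (- complex_of_real s * complex_of_real (X \<omega>)) \<partial>M)
       = complex_of_real (\<integral>\<omega>. w \<omega> * exp (- s * X \<omega>) \<partial>M)"
proof -
  have "(\<integral>\<omega>. complex_of_real (w \<omega>) * exp (- complex_of_real s * complex_of_real (X \<omega>)) \<partial>M)
      = (\<integral>\<omega>. complex_of_real (w \<omega> * exp (- s * X \<omega>)) \<partial>M)"
    by (intro Bochner_Integration.integral_cong refl) (simp add: of_real_exp)
  also have "\<dots> = complex_of_real (\<integral>\<omega>. w \<omega> * exp (- s * X \<omega>) \<partial>M)"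
    by (rule integral_complex_of_real)
  finally show ?thesis .
qed

lemma uniq1:
  fixes M1 :: "'a measure" and M2 :: "'b measure" and X1 w1 :: "'a \<Rightarrow> real"
    and X2 w2 :: "'b \<Rightarrow> real" and m :: "nat \<Rightarrow> real"
  assumes m_pos: "m 0 > 0" and m_mono: "strict_mono m" and m_div: "\<not> summable (\<lambda>i. 1 / m i)"
    and P1: "prob_space M1" and X1m[measurable]: "X1 \<in> borel_measurable M1" and w1m[measurable]: "w1 \<in> borel_measurable M1"
    and X1nn: "\<forall>\<omega>\<in>space M1. X1 \<omega> \<ge> 0" and w1b: "\<forall>\<omega>\<in>space M1. 0 \<le> w1 \<omega> \<and> w1 \<omega> \<le> 1"
    and P2: "prob_space M2" and X2m[measurable]: "X2 \<in> borel_measurable M2" and w2m[measurable]: "w2 \<in> borel_measurable M2"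
    and X2nn: "\<forall>\<omega>\<in>space M2. X2 \<omega> \<ge> 0" and w2b: "\<forall>\<omega>\<in>space M2. 0 \<le> w2 \<omega> \<and> w2 \<omega> \<le> 1"
    and eq: "\<forall>i. (\<integral>\<omega>. w1 \<omega> * exp (- m i * X1 \<omega>) \<partial>M1) = (\<integral>\<omega>. w2 \<omega> * exp (- m i * X2 \<omega>) \<partial>M2)"
  shows "(\<integral>\<omega>. (if X1 \<omega> \<le> y then w1 \<omega> else 0) \<partial>M1) = (\<integral>\<omega>. (if X2 \<omega> \<le> y then w2 \<omega> else 0) \<partial>M2)"
proof -
  interpret M1: prob_space M1 by (rule P1)
  interpret M2: prob_space M2 by (rule P2)
  have w1a: "\<forall>\<omega>\<in>space M1. \<bar>w1 \<omega>\<bar> \<le> 1" using w1b by auto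
  have w2a: "\<forall>\<omega>\<in>space M2. \<bar>w2 \<omega>\<bar> \<le> 1" using w2b by auto
  define G1 where "G1 = (\<lambda>z. \<integral>\<omega>. complex_of_real (w1 \<omega>) * exp (- z * complex_of_real (X1 \<omega>)) \<partial>M1)"
  define G2 where "G2 = (\<lambda>z. \<integral>\<omega>. complex_of_real (w2 \<omega>) * exp (- z * complex_of_real (X2 \<omega>)) \<partial>M2)"
  have h1: "G1 holomorphic_on {z. 0 < Re z}" unfolding G1_def by (rule laplace_holo[OF P1 X1m w1m X1nn w1a])
  have h2: "G2 holomorphic_on {z. 0 < Re z}" unfolding G2_def by (rule laplace_holo[OF P2 X2m w2m X2nn w2a])
  have Geq: "G1 z = G2 z" if z: "0 < Re z" for z
  proof -
    have "(\<lambda>z. G1 z - G2 z) z = 0"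
    proof (rule halfplane_zero[OF _ _ m_pos m_mono m_div _ z, where C=2])
      show "(\<lambda>z. G1 z - G2 z) holomorphic_on {z. 0 < Re z}" using h1 h2 by (intro holomorphic_intros)
      show "\<forall>z. 0 < Re z \<longrightarrow> norm (G1 z - G2 z) \<le> 2"
      proof (intro allI impI)
        fix z :: complex assume "0 < Re z"
        then have "Re z \<ge> 0" by simp
        then have "norm (G1 z) \<le> 1" "norm (G2 z) \<le> 1" unfolding G1_def G2_def
          by (rule laplace_int_bound[OF P1 X1m w1m X1nn w1a], rule laplace_int_bound[OF P2 X2m w2m X2nn w2a])
        then show "norm (G1 z - G2 z) \<le> 2" using norm_triangle_ineq4[of "G1 z" "G2 z"] by linarith
      qed
      show "\<forall>i. G1 (complex_of_real (m i)) - G2 (complex_of_real (m i)) = 0"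
        unfolding G1_def G2_def laplace_real using eq by simp
    qed
    then show ?thesis by simp
  qed
  define c1 where "c1 = (\<integral>\<omega>. w1 \<omega> * exp (- X1 \<omega>) \<partial>M1)"
  define c2 where "c2 = (\<integral>\<omega>. w2 \<omega> * exp (- X2 \<omega>) \<partial>M2)"
  have "G1 (complex_of_real 1) = G2 (complex_of_real 1)" using Geq by simp
  then have "complex_of_real c1 = complex_of_real c2"
    unfolding G1_def G2_def laplace_real c1_def c2_def by simp
  then have c12: "c1 = c2" by simp
  have int1: "integrable M1 (\<lambda>\<omega>. w1 \<omega> * exp (- X1 \<omega>))"
    by (rule M1.integrable_const_bound[where B=1]) (use w1b X1nn in \<open>auto intro!: AE_I2 simp: abs_mult mult_le_one\<close>)
  have int2: "integrable M2 (\<lambda>\<omega>. w2 \<omega> * exp (- X2 \<omega>))"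
    by (rule M2.integrable_const_bound[where B=1]) (use w2b X2nn in \<open>auto intro!: AE_I2 simp: abs_mult mult_le_one\<close>)
  have nn1: "AE \<omega> in M1. 0 \<le> w1 \<omega> * exp (- X1 \<omega>)" using w1b by (auto intro!: AE_I2)
  have nn2: "AE \<omega> in M2. 0 \<le> w2 \<omega> * exp (- X2 \<omega>)" using w2b by (auto intro!: AE_I2)
  have c1nn: "c1 \<ge> 0" unfolding c1_def using nn1 by (rule integral_nonneg_AE)
  show ?thesis
  proof (cases "c1 = 0")
    case True
    have z1: "AE \<omega> in M1. w1 \<omega> * exp (- X1 \<omega>) = 0"
      using integral_nonneg_eq_0_iff_AE[OF int1 nn1] True c1_def by simp
    have z2: "AE \<omega> in M2. w2 \<omega> * exp (- X2 \<omega>) = 0"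
      using integral_nonneg_eq_0_iff_AE[OF int2 nn2] True c12 c2_def by simp
    have "(\<integral>\<omega>. (if X1 \<omega> \<le> y then w1 \<omega> else 0) \<partial>M1) = 0"
      by (rule integral_eq_zero_AE) (use z1 in \<open>eventually_elim, auto\<close>)
    moreover have "(\<integral>\<omega>. (if X2 \<omega> \<le> y then w2 \<omega> else 0) \<partial>M2) = 0"
      by (rule integral_eq_zero_AE) (use z2 in \<open>eventually_elim, auto\<close>)
    ultimately show ?thesis by simp
  next
    case False
    with c1nn have cpos: "c1 > 0" by simp
    define c where "c = c1"
    have cp: "c > 0" using cpos by (simp add: c_def)
    have c2c: "c2 = c" using c12 c_def by simp
    define D1 where "D1 = density M1 (\<lambda>\<omega>. ennreal (w1 \<omega> * exp (- X1 \<omega>) / c))"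
    define D2 where "D2 = density M2 (\<lambda>\<omega>. ennreal (w2 \<omega> * exp (- X2 \<omega>) / c))"
    define Q1 where "Q1 = distr D1 borel X1"
    define Q2 where "Q2 = distr D2 borel X2"
    have X1D[measurable]: "X1 \<in> borel_measurable D1" unfolding D1_def by simp
    have X2D[measurable]: "X2 \<in> borel_measurable D2" unfolding D2_def by simp
    have pD1: "prob_space D1"
    proof (rule prob_spaceI)
      have "emeasure D1 (space D1) = (\<integral>\<^sup>+\<omega>. ennreal (w1 \<omega> * exp (- X1 \<omega>) / c) * indicator (space M1) \<omega> \<partial>M1)"
        unfolding D1_def by (subst space_density, rule emeasure_density) auto
      also have "\<dots> = (\<integral>\<^sup>+\<omega>. ennreal (w1 \<omega> * exp (- X1 \<omega>) / c) \<partial>M1)"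
        by (rule nn_integral_cong) (simp add: indicator_def)
      also have "\<dots> = ennreal (\<integral>\<omega>. w1 \<omega> * exp (- X1 \<omega>) / c \<partial>M1)"
      proof (rule nn_integral_eq_integral)
        show "integrable M1 (\<lambda>\<omega>. w1 \<omega> * exp (- X1 \<omega>) / c)" using int1 by (rule integrable_divide_zero)
        show "AE \<omega> in M1. 0 \<le> w1 \<omega> * exp (- X1 \<omega>) / c" using nn1 by eventually_elim (use cpos in \<open>simp add: c_def\<close>)
      qed
      also have "\<dots> = 1" using cpos by (simp add: c_def c1_def)
      finally show "emeasure D1 (space D1) = 1" .
    qed
    have pD2: "prob_space D2"
    proof (rule prob_spaceI)
      have "emeasure D2 (space D2) = (\<integral>\<^sup>+\<omega>. ennreal (w2 \<omega> * exp (- X2 \<omega>) / c) * indicator (space M2) \<omega> \<partial>M2)"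
        unfolding D2_def by (subst space_density, rule emeasure_density) auto
      also have "\<dots> = (\<integral>\<^sup>+\<omega>. ennreal (w2 \<omega> * exp (- X2 \<omega>) / c) \<partial>M2)"
        by (rule nn_integral_cong) (simp add: indicator_def)
      also have "\<dots> = ennreal (\<integral>\<omega>. w2 \<omega> * exp (- X2 \<omega>) / c \<partial>M2)"
      proof (rule nn_integral_eq_integral)
        show "integrable M2 (\<lambda>\<omega>. w2 \<omega> * exp (- X2 \<omega>) / c)" using int2 by (rule integrable_divide_zero)
        show "AE \<omega> in M2. 0 \<le> w2 \<omega> * exp (- X2 \<omega>) / c" using nn2 by eventually_elim (use cpos in \<open>simp add: c_def\<close>)
      qed
      also have "\<dots> = 1" using cp c2c by (simp add: c2_def)
      finally show "emeasure D2 (space D2) = 1" .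
    qed
    have rd1: "real_distribution Q1" unfolding Q1_def
      by (rule real_distribution.intro[OF prob_space.prob_space_distr[OF pD1]]) (auto intro: real_distribution_axioms.intro)
    have rd2: "real_distribution Q2" unfolding Q2_def
      by (rule real_distribution.intro[OF prob_space.prob_space_distr[OF pD2]]) (auto intro: real_distribution_axioms.intro)
    have intQ1: "integral\<^sup>L Q1 f = (\<integral>\<omega>. (w1 \<omega> * exp (- X1 \<omega>) / c) *\<^sub>R f (X1 \<omega>) \<partial>M1)"
      if [measurable]: "f \<in> borel_measurable borel" for f :: "real \<Rightarrow> 'c::{banach, second_countable_topology}"
      unfolding Q1_def D1_def using w1b cp
      by (subst integral_distr) (auto simp: D1_def intro!: integral_density AE_I2)
    have intQ2: "integral\<^sup>L Q2 f = (\<integral>\<omega>. (w2 \<omega> * exp (- X2 \<omega>) / c) *\<^sub>R f (X2 \<omega>) \<partial>M2)"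
      if [measurable]: "f \<in> borel_measurable borel" for f :: "real \<Rightarrow> 'c::{banach, second_countable_topology}"
      unfolding Q2_def D2_def using w2b cp
      by (subst integral_distr) (auto simp: D2_def intro!: integral_density AE_I2)
    have chr: "(w \<omega>' * exp (- x) / c) *\<^sub>R iexp (t * x) = complex_of_real (1 / c) *
        (complex_of_real (w \<omega>') * exp (- (1 - \<i> * complex_of_real t) * complex_of_real x))" for w :: "'d \<Rightarrow> real" and \<omega>' x t
      by (simp add: scaleR_conv_of_real of_real_exp exp_add[symmetric] algebra_simps)
    have "char Q1 = char Q2"
    proof
      fix t
      have "char Q1 t = (\<integral>\<omega>. (w1 \<omega> * exp (- X1 \<omega>) / c) *\<^sub>R iexp (t * X1 \<omega>) \<partial>M1)"
        unfolding char_def by (rule intQ1) measurable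
      also have "\<dots> = (\<integral>\<omega>. complex_of_real (1 / c) * (complex_of_real (w1 \<omega>) * exp (- (1 - \<i> * complex_of_real t) * complex_of_real (X1 \<omega>))) \<partial>M1)"
        by (rule Bochner_Integration.integral_cong[OF refl chr])
      also have "\<dots> = complex_of_real (1 / c) * G1 (1 - \<i> * complex_of_real t)"
        unfolding G1_def by (rule integral_mult_right_zero)
      also have "\<dots> = complex_of_real (1 / c) * G2 (1 - \<i> * complex_of_real t)"
        using Geq[of "1 - \<i> * complex_of_real t"] by simp
      also have "\<dots> = (\<integral>\<omega>. complex_of_real (1 / c) * (complex_of_real (w2 \<omega>) * exp (- (1 - \<i> * complex_of_real t) * complex_of_real (X2 \<omega>))) \<partial>M2)"
        unfolding G2_def by (rule integral_mult_right_zero[symmetric])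
      also have "\<dots> = (\<integral>\<omega>. (w2 \<omega> * exp (- X2 \<omega>) / c) *\<^sub>R iexp (t * X2 \<omega>) \<partial>M2)"
        by (rule Bochner_Integration.integral_cong[OF refl chr[symmetric]])
      also have "\<dots> = char Q2 t"
        unfolding char_def by (rule intQ2[symmetric]) measurable
      finally show "char Q1 t = char Q2 t" .
    qed
    then have QQ: "Q1 = Q2" using Levy_uniqueness[OF rd1 rd2] by simp
    define f where "f = (\<lambda>x::real. if x \<le> y then exp x else 0)"
    have fm[measurable]: "f \<in> borel_measurable borel" unfolding f_def by measurable
    have e1: "integral\<^sup>L Q1 f = (\<integral>\<omega>. (if X1 \<omega> \<le> y then w1 \<omega> else 0) \<partial>M1) / c"
      unfolding intQ1[OF fm]
      by (subst integral_divide_zero[symmetric], intro Bochner_Integration.integral_cong refl)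
         (simp add: f_def exp_minus field_simps)
    have e2: "integral\<^sup>L Q2 f = (\<integral>\<omega>. (if X2 \<omega> \<le> y then w2 \<omega> else 0) \<partial>M2) / c"
      unfolding intQ2[OF fm]
      by (subst integral_divide_zero[symmetric], intro Bochner_Integration.integral_cong refl)
         (simp add: f_def exp_minus field_simps)
    show ?thesis using e1 e2 QQ cpos by (simp add: c_def)
  qed
qed

lemma jcdf_int:
  fixes M :: "'a measure" and X Y :: "'a \<Rightarrow> real"
  assumes P: "prob_space M" and [measurable]: "X \<in> borel_measurable M" "Y \<in> borel_measurable M"
  shows "joint_cdf M X Y x y = (\<integral>\<omega>. (if Y \<omega> \<le> y then (if X \<omega> \<le> x then 1 else 0) else 0) \<partial>M)"
proof -
  interpret prob_space M by (rule P)
  have S: "{\<omega> \<in> space M. X \<omega> \<le> x \<and> Y \<omega> \<le> y} \<in> sets M" by measurable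
  have "joint_cdf M X Y x y = (\<integral>\<omega>. indicator {\<omega> \<in> space M. X \<omega> \<le> x \<and> Y \<omega> \<le> y} \<omega> \<partial>M)"
  proof -
    have "{\<omega> \<in> space M. X \<omega> \<le> x \<and> Y \<omega> \<le> y} \<inter> space M = {\<omega> \<in> space M. X \<omega> \<le> x \<and> Y \<omega> \<le> y}" by auto
    then show ?thesis unfolding joint_cdf_def integral_indicator by simp
  qed
  also have "\<dots> = (\<integral>\<omega>. (if Y \<omega> \<le> y then (if X \<omega> \<le> x then 1 else 0) else 0) \<partial>M)"
    by (intro Bochner_Integration.integral_cong refl) (auto simp: indicator_def)
  finally show ?thesis .
qed

theorem theorem3:
  fixes m n :: "nat \<Rightarrow> real"
    and M1 :: "'a measure" and X1 Y1 :: "'a \<Rightarrow> real"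
    and M2 :: "'b measure" and X2 Y2 :: "'b \<Rightarrow> real"
  assumes m_pos: "m 0 > 0" and m_mono: "strict_mono m"
    and m_div: "\<not> summable (\<lambda>i. 1 / m i)"
    and n_pos: "n 0 > 0" and n_mono: "strict_mono n"
    and n_div: "\<not> summable (\<lambda>j. 1 / n j)"
    and P1: "prob_space M1"
    and X1_rv: "X1 \<in> borel_measurable M1" and Y1_rv: "Y1 \<in> borel_measurable M1"
    and X1_nn: "\<forall>\<omega>\<in>space M1. X1 \<omega> \<ge> 0" and Y1_nn: "\<forall>\<omega>\<in>space M1. Y1 \<omega> \<ge> 0"
    and P2: "prob_space M2"
    and X2_rv: "X2 \<in> borel_measurable M2" and Y2_rv: "Y2 \<in> borel_measurable M2"
    and X2_nn: "\<forall>\<omega>\<in>space M2. X2 \<omega> \<ge> 0" and Y2_nn: "\<forall>\<omega>\<in>space M2. Y2 \<omega> \<ge> 0"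
    and eq: "\<forall>i j. bivariate_LST M1 X1 Y1 (m i) (n j) = bivariate_LST M2 X2 Y2 (m i) (n j)"
  shows "joint_cdf M1 X1 Y1 = joint_cdf M2 X2 Y2"
proof -
  note [measurable] = X1_rv Y1_rv X2_rv Y2_rv
  have npos: "n j > 0" for j using strict_mono_less_eq[OF n_mono, of 0 j] n_pos by simp
  have A: "(\<integral>\<omega>. (if X1 \<omega> \<le> x then exp (- n j * Y1 \<omega>) else 0) \<partial>M1)
         = (\<integral>\<omega>. (if X2 \<omega> \<le> x then exp (- n j * Y2 \<omega>) else 0) \<partial>M2)" for j x
  proof (rule uniq1[OF m_pos m_mono m_div P1 X1_rv _ X1_nn _ P2 X2_rv _ X2_nn])
    show "(\<lambda>\<omega>. exp (- n j * Y1 \<omega>)) \<in> borel_measurable M1" by measurable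
    show "(\<lambda>\<omega>. exp (- n j * Y2 \<omega>)) \<in> borel_measurable M2" by measurable
    show "\<forall>\<omega>\<in>space M1. 0 \<le> exp (- n j * Y1 \<omega>) \<and> exp (- n j * Y1 \<omega>) \<le> 1"
      using Y1_nn npos[of j] by (auto simp: mult_nonneg_nonneg)
    show "\<forall>\<omega>\<in>space M2. 0 \<le> exp (- n j * Y2 \<omega>) \<and> exp (- n j * Y2 \<omega>) \<le> 1"
      using Y2_nn npos[of j] by (auto simp: mult_nonneg_nonneg)
    show "\<forall>i. (\<integral>\<omega>. exp (- n j * Y1 \<omega>) * exp (- m i * X1 \<omega>) \<partial>M1) =
              (\<integral>\<omega>. exp (- n j * Y2 \<omega>) * exp (- m i * X2 \<omega>) \<partial>M2)"
    proof
      fix i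
      have "(\<integral>\<omega>. exp (- n j * Y1 \<omega>) * exp (- m i * X1 \<omega>) \<partial>M1) = bivariate_LST M1 X1 Y1 (m i) (n j)"
        unfolding bivariate_LST_def
        by (intro Bochner_Integration.integral_cong refl) (simp add: exp_add[symmetric] algebra_simps)
      also have "\<dots> = bivariate_LST M2 X2 Y2 (m i) (n j)" using eq by simp
      also have "\<dots> = (\<integral>\<omega>. exp (- n j * Y2 \<omega>) * exp (- m i * X2 \<omega>) \<partial>M2)"
        unfolding bivariate_LST_def
        by (intro Bochner_Integration.integral_cong refl) (simp add: exp_add[symmetric] algebra_simps)
      finally show "(\<integral>\<omega>. exp (- n j * Y1 \<omega>) * exp (- m i * X1 \<omega>) \<partial>M1) =
              (\<integral>\<omega>. exp (- n j * Y2 \<omega>) * exp (- m i * X2 \<omega>) \<partial>M2)" .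
    qed
  qed
  have B: "(\<integral>\<omega>. (if Y1 \<omega> \<le> y then (if X1 \<omega> \<le> x then 1 else 0) else 0) \<partial>M1)
         = (\<integral>\<omega>. (if Y2 \<omega> \<le> y then (if X2 \<omega> \<le> x then 1 else 0) else 0 :: real) \<partial>M2)" for x y
  proof -
    have m1: "(\<lambda>\<omega>. if X1 \<omega> \<le> x then 1 else 0 :: real) \<in> borel_measurable M1" by measurable
    have m2: "(\<lambda>\<omega>. if X2 \<omega> \<le> x then 1 else 0 :: real) \<in> borel_measurable M2" by measurable
    have b1: "\<forall>\<omega>\<in>space M1. 0 \<le> (if X1 \<omega> \<le> x then 1 else 0 :: real) \<and> (if X1 \<omega> \<le> x then 1 else 0 :: real) \<le> 1" by auto
    have b2: "\<forall>\<omega>\<in>space M2. 0 \<le> (if X2 \<omega> \<le> x then 1 else 0 :: real) \<and> (if X2 \<omega> \<le> x then 1 else 0 :: real) \<le> 1" by auto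
    have e: "\<forall>j. (\<integral>\<omega>. (if X1 \<omega> \<le> x then 1 else 0) * exp (- n j * Y1 \<omega>) \<partial>M1) =
              (\<integral>\<omega>. (if X2 \<omega> \<le> x then 1 else 0) * exp (- n j * Y2 \<omega>) \<partial>M2)"
    proof
      fix j
      have "(\<integral>\<omega>. (if X1 \<omega> \<le> x then 1 else 0) * exp (- n j * Y1 \<omega>) \<partial>M1)
          = (\<integral>\<omega>. (if X1 \<omega> \<le> x then exp (- n j * Y1 \<omega>) else 0) \<partial>M1)"
        by (intro Bochner_Integration.integral_cong refl) simp
      also have "\<dots> = (\<integral>\<omega>. (if X2 \<omega> \<le> x then exp (- n j * Y2 \<omega>) else 0) \<partial>M2)" by (rule A)
      also have "\<dots> = (\<integral>\<omega>. (if X2 \<omega> \<le> x then 1 else 0) * exp (- n j * Y2 \<omega>) \<partial>M2)"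
        by (intro Bochner_Integration.integral_cong refl) simp
      finally show "(\<integral>\<omega>. (if X1 \<omega> \<le> x then 1 else 0) * exp (- n j * Y1 \<omega>) \<partial>M1) =
              (\<integral>\<omega>. (if X2 \<omega> \<le> x then 1 else 0) * exp (- n j * Y2 \<omega>) \<partial>M2)" .
    qed
    show ?thesis
      using uniq1[OF n_pos n_mono n_div P1 Y1_rv m1 Y1_nn b1 P2 Y2_rv m2 Y2_nn b2 e, of y] by simp
  qed
  show ?thesis
  proof (intro ext)
    fix x y
    show "joint_cdf M1 X1 Y1 x y = joint_cdf M2 X2 Y2 x y"
      unfolding jcdf_int[OF P1 X1_rv Y1_rv] jcdf_int[OF P2 X2_rv Y2_rv] by (rule B)
  qed
qed

end
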